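(* Let $t_n>0$ be a sequence with $t_n\to 0$ and put $r_n=1/t_n$. For each $n$ let $(x_n,y_n,z_n)$ be a point of the model $\mathcal H_{t_n}$ of hyperbolic space described in the context, and let $C_n\subset\mathcal X_{t_n}$ be the corresponding curve, written in the form $$a^{00}_n+a^{10}_n\zeta-\tfrac{1}{t_n}\eta+a^{11}_n\zeta\eta=0 .$$ Suppose that $a^{00}_n$, $a^{11}_n$ and $a^{10}_n-1/t_n$ have finite limits $A^{00}$, $A^{11}$, $A^{10}$ respectively. Then $(x_n,y_n,z_n)$ converges in $\mathbb R^3$ to a point $(x,y,z)$, and $(x,y,z)$ is the point of Euclidean $\mathbb R^3$ whose associated curve in $\mathcal X_0=T\mathbb P^1$ is $w=A^{00}+A^{10}\zeta+A^{11}\zeta^2$.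
   Context: The complex 3-manifold $\mathcal X$ is obtained by gluing $U_0=\{(\zeta,w,t)\in\mathbb C^3:\ |\zeta|^2+tw\bar\zeta+1\neq0\}$ and $U_1=\{(\tilde\zeta,\tilde w,\tilde t)\in\mathbb C^3:\ |\tilde\zeta|^2+\tilde t\tilde w\bar{\tilde\zeta}+1\neq 0\}$ over $\zeta,\tilde\zeta\ne0$, $\zeta+tw\neq0$, $\tilde\zeta+\tilde t\tilde w\neq0$, via $\tilde\zeta=1/\zeta$, $\tilde w=-w/((\zeta+tw)\zeta)$, $\tilde t=t$. Let $\pi:\mathcal X\to\mathbb C$, $\pi(\zeta,w,t)=t$, and $\mathcal X_t=\pi^{-1}(t)$. Then $\mathcal X_0=T\mathbb P^1$ with $\zeta$ the affine coordinate on $\mathbb P^1$ and $w$ the fibre coordinate of $w\,\partial/\partial\zeta$. For $t\neq0$ put $\eta=\zeta+tw$ (and $\tilde\eta=\tilde\zeta+t\tilde w=1/\eta$); then $(\zeta,\eta)$ identify $\mathcal X_t$ with $\mathbb P^1\times\mathbb P^1-\overline\Delta$, where $\overline\Delta=\{(\zeta,-1/\bar\zeta)\}$ is the antidiagonal. The real structure is $\sigma(\zeta,w,t)=\bigl(-1/(\bar\zeta+\bar t\bar w),\ -\bar w/((\bar\zeta+\bar t\bar w)\bar\zeta),\ \bar t\bigr)$, i.e. $\sigma(\zeta,\eta,t)=(-1/\bar\eta,-1/\bar\zeta,\bar t)$ for $t\ne0$. For $t>0$ and $r=1/t$, let $\mathcal H_t=\{(x,y,z)\in\mathbb R^3: z>-r\}$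 with metric $\frac{r^2}{(z+r)^2}(dx^2+dy^2+dz^2)$ (a hyperbolic space of constant curvature determined by $t$, tending to Euclidean $\mathbb R^3$ as $t\to0$). The point $(x,y,z)\in\mathcal H_t$ corresponds to the $\sigma$-invariant $(1,1)$-curve in $\mathcal X_t$ $$(x+iy)+2z\zeta-(x-iy)\zeta\eta+r(\zeta-\eta)+\frac{x^2+y^2+z^2}{r}\zeta=0 .$$ A point $(x,y,z)$ of Euclidean $\mathbb R^3$ corresponds to the curve $w=(x+iy)+2z\zeta-(x-iy)\zeta^2$ in $T\mathbb P^1=\mathcal X_0$. *)

theory Defs
  imports "HOL-Analysis.Analysis"
begin

definition in_H :: "real \<Rightarrow> real \<Rightarrow> real \<Rightarrow> real \<Rightarrow> bool" where
  "in_H t x y z \<longleftrightarrow> z > - (1 / t)"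

text \<open>Left-hand side of the equation of the sigma-invariant (1,1)-curve in X_t
  corresponding to (x,y,z) in H_t, in the coordinates (zeta, eta), r = 1/t.\<close>
definition hyp_curve :: "real \<Rightarrow> real \<Rightarrow> real \<Rightarrow> real \<Rightarrow> complex \<Rightarrow> complex \<Rightarrow> complex" where
  "hyp_curve t x y z \<zeta> \<eta> =
     (let r = 1 / t in
       Complex x y + of_real (2 * z) * \<zeta> - Complex x (- y) * \<zeta> * \<eta>
       + of_real r * (\<zeta> - \<eta>) + of_real ((x\<^sup>2 + y\<^sup>2 + z\<^sup>2) / r) * \<zeta>)"

text \<open>Right-hand side w = ... of the curve in T P^1 = X_0 corresponding to a point of R^3.\<close>
definition euclid_curve :: "real \<Rightarrow> real \<Rightarrow> real \<Rightarrow> complex \<Rightarrow> complex" where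
  "euclid_curve x y z \<zeta> = Complex x y + of_real (2 * z) * \<zeta> - Complex x (- y) * \<zeta>\<^sup>2"

end

theory Submission
  imports Defs
begin

theorem mainTheorem1:
  fixes t x y z :: "nat \<Rightarrow> real"
    and a00 a10 a11 :: "nat \<Rightarrow> complex"
    and A00 A10 A11 :: complex
  assumes tpos: "\<And>n. t n > 0"
    and tlim: "t \<longlonglongrightarrow> 0"
    and inH: "\<And>n. in_H (t n) (x n) (y n) (z n)"
    and form: "\<And>n \<zeta> \<eta>. hyp_curve (t n) (x n) (y n) (z n) \<zeta> \<eta>
                 = a00 n + a10 n * \<zeta> - of_real (1 / t n) * \<eta> + a11 n * \<zeta> * \<eta>"
    and lim00: "a00 \<longlonglongrightarrow> A00"
    and lim11: "a11 \<longlonglongrightarrow> A11"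
    and lim10: "(\<lambda>n. a10 n - of_real (1 / t n)) \<longlonglongrightarrow> A10"
  shows "\<exists>x0 y0 z0. (\<lambda>n. (x n, y n, z n)) \<longlonglongrightarrow> (x0, y0, z0)
           \<and> (\<forall>\<zeta>. euclid_curve x0 y0 z0 \<zeta> = A00 + A10 * \<zeta> + A11 * \<zeta>\<^sup>2)"
proof -
  have h0: "a00 n = Complex (x n) (y n)" for n
    using form[of n 0 0] by (simp add: hyp_curve_def Let_def)
  have e1: "Complex (x n) (y n) + of_real (2 * z n) + of_real (1 / t n)
        + of_real ((x n ^ 2 + y n ^ 2 + z n ^ 2) * t n) = a00 n + a10 n" for n
    using form[of n 1 0] tpos[of n] by (simp add: hyp_curve_def Let_def)
  have e2: "Complex (x n) (y n) + of_real (2 * z n) - Complex (x n) (- y n)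
        + of_real ((x n ^ 2 + y n ^ 2 + z n ^ 2) * t n) = a00 n + a10 n - of_real (1 / t n) + a11 n" for n
    using form[of n 1 1] tpos[of n] by (simp add: hyp_curve_def Let_def)
  have h11: "a11 n = - cnj (a00 n)" for n
  proof -
    have "a11 n = (Complex (x n) (y n) + of_real (2 * z n) - Complex (x n) (- y n)
        + of_real ((x n ^ 2 + y n ^ 2 + z n ^ 2) * t n)) - (Complex (x n) (y n) + of_real (2 * z n) + of_real (1 / t n)
        + of_real ((x n ^ 2 + y n ^ 2 + z n ^ 2) * t n)) + of_real (1 / t n)"
      unfolding e1[of n] e2[of n] by (simp add: algebra_simps)
    also have "\<dots> = - Complex (x n) (- y n)" by (simp add: algebra_simps)
    finally show ?thesis using h0[of n] by (simp add: complex_eq_iff)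
  qed
  have h10: "a10 n - of_real (1 / t n) = of_real (2 * z n + t n * (x n ^ 2 + y n ^ 2 + z n ^ 2))" for n
    using e1[of n] h0[of n] by (simp add: complex_eq_iff algebra_simps)
  have xl: "x \<longlonglongrightarrow> Re A00"
    using tendsto_Re[OF lim00] by (simp add: h0)
  have yl: "y \<longlonglongrightarrow> Im A00"
    using tendsto_Im[OF lim00] by (simp add: h0)
  have sl: "(\<lambda>n. 2 * z n + t n * (x n ^ 2 + y n ^ 2 + z n ^ 2)) \<longlonglongrightarrow> Re A10"
  proof -
    have "(\<lambda>n. Re (a10 n - of_real (1 / t n))) = (\<lambda>n. 2 * z n + t n * (x n ^ 2 + y n ^ 2 + z n ^ 2))"
      by (rule ext, simp only: h10 Re_complex_of_real)
    thus ?thesis using tendsto_Re[OF lim10] by simp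
  qed
  have "(\<lambda>n. Im (a10 n - of_real (1 / t n))) \<longlonglongrightarrow> Im A10"
    using tendsto_Im[OF lim10] .
  moreover have "(\<lambda>n. Im (a10 n - of_real (1 / t n))) = (\<lambda>n. 0::real)"
    by (rule ext, simp only: h10 Im_complex_of_real)
  ultimately have "(\<lambda>n. 0::real) \<longlonglongrightarrow> Im A10" by simp
  hence imA10: "Im A10 = 0" using LIMSEQ_unique tendsto_const by blast
  have "(\<lambda>n. - cnj (a00 n)) \<longlonglongrightarrow> - cnj A00"
    by (intro tendsto_intros lim00)
  hence A11e: "A11 = - cnj A00" using lim11 LIMSEQ_unique h11 by (metis (no_types) ext)
  define u where "u n = 2 * z n + t n * (x n ^ 2 + y n ^ 2 + z n ^ 2) - t n * (x n ^ 2 + y n ^ 2)" for n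
  have ul: "u \<longlonglongrightarrow> Re A10 - 0 * (Re A00 ^ 2 + Im A00 ^ 2)"
    unfolding u_def by (intro tendsto_intros sl tlim xl yl)
  have zform: "z n = u n / (sqrt (1 + t n * u n) + 1)" for n
  proof -
    have tp: "t n > 0" by (rule tpos)
    have pz: "t n * z n + 1 > 0" using inH[of n] tp
      by (simp add: in_H_def field_simps)
    have "1 + t n * u n = (t n * z n + 1)^2"
      unfolding u_def by (simp add: power2_eq_square algebra_simps)
    hence "sqrt (1 + t n * u n) = t n * z n + 1" using pz by simp
    moreover have "u n = z n * (t n * z n + 2)"
      unfolding u_def by (simp add: power2_eq_square algebra_simps)
    moreover have "t n * z n + 2 > 0" using pz by simp
    ultimately show ?thesis by (simp add: add.commute)
  qed
  have "(\<lambda>n. u n / (sqrt (1 + t n * u n) + 1)) \<longlonglongrightarrow> Re A10 / (sqrt (1 + 0 * Re A10) + 1)"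
    using ul by (intro tendsto_intros tlim) auto
  moreover have "z = (\<lambda>n. u n / (sqrt (1 + t n * u n) + 1))" using zform by (rule ext)
  ultimately have zl: "z \<longlonglongrightarrow> Re A10 / 2" by simp
  have "(\<lambda>n. (x n, y n, z n)) \<longlonglongrightarrow> (Re A00, Im A00, Re A10 / 2)"
    by (intro tendsto_Pair xl yl zl)
  moreover have "\<forall>\<zeta>. euclid_curve (Re A00) (Im A00) (Re A10 / 2) \<zeta> = A00 + A10 * \<zeta> + A11 * \<zeta>\<^sup>2"
  proof
    fix \<zeta>
    have a: "A10 = of_real (Re A10)" using imA10 by (simp add: complex_eq_iff)
    have b: "Complex (Re A00) (Im A00) = A00" by simp
    have c: "Complex (Re A00) (- Im A00) = cnj A00" by (simp add: complex_eq_iff)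
    show "euclid_curve (Re A00) (Im A00) (Re A10 / 2) \<zeta> = A00 + A10 * \<zeta> + A11 * \<zeta>\<^sup>2"
      unfolding euclid_curve_def b c A11e by (subst (2) a) simp
  qed
  ultimately show ?thesis by blast
qed

end
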